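(* Let $n\geq 3$, $k\in\mathbb{Z}_n$ with $k\neq 0$ and $2k\not\equiv 0\pmod n$, and let $C$ be a total perfect code in $\mathrm{GP}(n,k)$. If $E(C)\cap E(U)\neq\emptyset$, then $E(C)\cap E(U,V)=\emptyset$.
   Context: For an integer $n\geq 3$ and a nonzero $k\in\mathbb{Z}_n$, the generalized Petersen graph $\mathrm{GP}(n,k)$ is the simple graph with vertex set $\{u_i,v_i\mid i\in\mathbb{Z}_n\}$ and edges $u_iu_{i+1}$, $u_iv_i$, $v_iv_{i+k}$ for all $i\in\mathbb{Z}_n$ (indices modulo $n$). Let $U=\{u_i\mid i\in\mathbb{Z}_n\}$ and $V=\{v_i\mid i\in\mathbb{Z}_n\}$. For vertex subsets $A,B$, $E(A,B)$ is the set of edges with one end in $A$ and the other in $B$, and $E(A)=E(A,A)$. A total perfect code in a graph $\Gamma$ is a set $C\subseteq V(\Gamma)$ such that every vertex of $\Gamma$ is adjacent to exactly one vertex of $C$. *)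

theory Defs
  imports Main
begin

datatype gpv = U nat | V nat

definition gp_vertices :: "nat \<Rightarrow> gpv set" where
  "gp_vertices n = U ` {..<n} \<union> V ` {..<n}"

definition gp_adj :: "nat \<Rightarrow> nat \<Rightarrow> gpv \<Rightarrow> gpv \<Rightarrow> bool" where
  "gp_adj n k x y \<longleftrightarrow> x \<in> gp_vertices n \<and> y \<in> gp_vertices n \<and> x \<noteq> y \<and>
     (\<exists>i<n. ({x, y} = {U i, U ((i + 1) mod n)}) \<or> ({x, y} = {U i, V i})
            \<or> ({x, y} = {V i, V ((i + k) mod n)}))"

definition gp_edges :: "nat \<Rightarrow> nat \<Rightarrow> gpv set set" where
  "gp_edges n k = {{x, y} | x y. gp_adj n k x y}"

definition Uset :: "nat \<Rightarrow> gpv set" where "Uset n = U ` {..<n}"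
definition Vset :: "nat \<Rightarrow> gpv set" where "Vset n = V ` {..<n}"

definition edges_between :: "nat \<Rightarrow> nat \<Rightarrow> gpv set \<Rightarrow> gpv set \<Rightarrow> gpv set set" where
  "edges_between n k A B = {{x, y} | x y. gp_adj n k x y \<and> x \<in> A \<and> y \<in> B}"

definition total_perfect_code :: "nat \<Rightarrow> nat \<Rightarrow> gpv set \<Rightarrow> bool" where
  "total_perfect_code n k C \<longleftrightarrow> C \<subseteq> gp_vertices n \<and>
     (\<forall>x \<in> gp_vertices n. \<exists>!c. c \<in> C \<and> gp_adj n k x c)"

end

theory Submission imports Defs begin
lemma madd: fixes n c d i :: nat assumes "0 < n" "c \<le> n" "d \<le> n" "c + d = n" "i < n" shows "((i + c) mod n + d) mod n = i"
proof -
  have "((i + c) mod n + d) mod n = (i + c + d) mod n" by (rule mod_add_left_eq)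
  also have "\<dots> = (i + n) mod n" using assms by (simp add: add.assoc)
  finally show ?thesis using assms by simp
qed

lemma madd2: fixes n c i :: nat assumes "0 < n" "c \<le> n" "i < n" shows "((i + c) mod n + n - c) mod n = i"
proof -
  have "(i + c) mod n + n - c = (i + c) mod n + (n - c)" using assms by simp
  thus ?thesis using madd[of n c "n - c" i] assms by simp
qed

lemma madd3: fixes n c i :: nat assumes "0 < n" "c \<le> n" "i < n" shows "((i + n - c) mod n + c) mod n = i"
proof -
  have "i + n - c = i + (n - c)" using assms by simp
  thus ?thesis using madd[of n "n - c" c i] assms by simp
qed

lemma Uin: "0 < n \<Longrightarrow> U (m mod n) \<in> gp_vertices n" unfolding gp_vertices_def by auto
lemma Vin: "0 < n \<Longrightarrow> V (m mod n) \<in> gp_vertices n" unfolding gp_vertices_def by auto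
lemma Uin': "j < n \<Longrightarrow> U j \<in> gp_vertices n" unfolding gp_vertices_def by auto
lemma Vin': "j < n \<Longrightarrow> V j \<in> gp_vertices n" unfolding gp_vertices_def by auto

lemma neq_p: fixes n c j :: nat assumes "0 < c" "c < n" "j < n" shows "j \<noteq> (j + c) mod n"
proof
  assume h: "j = (j + c) mod n"
  show False
  proof (cases "j + c < n")
    case True
    hence "(j + c) mod n = j + c" by simp
    thus False using h assms by linarith
  next
    case False
    hence "(j + c) mod n = j + c - n" using assms by (simp add: mod_if)
    thus False using h assms \<open>\<not> j + c < n\<close> by linarith
  qed
qed

lemma adjU: assumes "3 \<le> n" "0 < k" "k < n" "j < n"
  shows "gp_adj n k (U j) y \<longleftrightarrow> (y = U ((j+1) mod n) \<or> y = U ((j+n-1) mod n) \<or> y = V j)"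
proof
  assume "gp_adj n k (U j) y"
  then obtain i where i: "i < n" and
    c: "{U j, y} = {U i, U ((i + 1) mod n)} \<or> {U j, y} = {U i, V i} \<or> {U j, y} = {V i, V ((i + k) mod n)}"
    unfolding gp_adj_def by blast
  from c show "y = U ((j+1) mod n) \<or> y = U ((j+n-1) mod n) \<or> y = V j"
  proof (elim disjE)
    assume "{U j, y} = {U i, U ((i + 1) mod n)}"
    hence "(j = i \<and> y = U ((i + 1) mod n)) \<or> (j = (i+1) mod n \<and> y = U i)"
      by (auto simp: doubleton_eq_iff)
    thus ?thesis using madd2[of n 1 i] i assms by auto
  qed (auto simp: doubleton_eq_iff)
next
  have n0: "0 < n" using assms by simp
  assume "y = U ((j+1) mod n) \<or> y = U ((j+n-1) mod n) \<or> y = V j"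
  thus "gp_adj n k (U j) y"
  proof (elim disjE)
    assume y: "y = U ((j+1) mod n)"
    have "j \<noteq> (j+1) mod n" using neq_p[of 1 n j] assms by simp
    thus ?thesis unfolding gp_adj_def using y n0 assms Uin Uin' by blast
  next
    assume y: "y = U ((j+n-1) mod n)"
    have "j \<noteq> (j+(n-1)) mod n" using neq_p[of "n-1" n j] assms by simp
    hence ne: "U j \<noteq> y" using y assms by simp
    have "{U j, y} = {U ((j+n-1) mod n), U (((j+n-1) mod n + 1) mod n)}"
      using madd3[of n 1 j] assms y by auto
    moreover have "(j+n-1) mod n < n" using n0 by simp
    ultimately show ?thesis unfolding gp_adj_def using y n0 assms Uin Uin' ne by blast
  next
    assume y: "y = V j"
    thus ?thesis unfolding gp_adj_def using assms Uin' Vin' by blast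
  qed
qed

lemma adjV: assumes "3 \<le> n" "0 < k" "k < n" "j < n"
  shows "gp_adj n k (V j) y \<longleftrightarrow> (y = V ((j+k) mod n) \<or> y = V ((j+n-k) mod n) \<or> y = U j)"
proof
  assume "gp_adj n k (V j) y"
  then obtain i where i: "i < n" and
    c: "{V j, y} = {U i, U ((i + 1) mod n)} \<or> {V j, y} = {U i, V i} \<or> {V j, y} = {V i, V ((i + k) mod n)}"
    unfolding gp_adj_def by blast
  from c show "y = V ((j+k) mod n) \<or> y = V ((j+n-k) mod n) \<or> y = U j"
  proof (elim disjE)
    assume "{V j, y} = {V i, V ((i + k) mod n)}"
    hence "(j = i \<and> y = V ((i + k) mod n)) \<or> (j = (i+k) mod n \<and> y = V i)"
      by (auto simp: doubleton_eq_iff)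
    thus ?thesis using madd2[of n k i] i assms by auto
  qed (auto simp: doubleton_eq_iff)
next
  have n0: "0 < n" using assms by simp
  assume "y = V ((j+k) mod n) \<or> y = V ((j+n-k) mod n) \<or> y = U j"
  thus "gp_adj n k (V j) y"
  proof (elim disjE)
    assume y: "y = V ((j+k) mod n)"
    have "j \<noteq> (j+k) mod n" using neq_p[of k n j] assms by simp
    thus ?thesis unfolding gp_adj_def using y n0 assms Vin Vin' by blast
  next
    assume y: "y = V ((j+n-k) mod n)"
    have "j \<noteq> (j+(n-k)) mod n" using neq_p[of "n-k" n j] assms by simp
    hence ne: "V j \<noteq> y" using y assms by simp
    have "{V j, y} = {V ((j+n-k) mod n), V (((j+n-k) mod n + k) mod n)}"
      using madd3[of n k j] assms y by auto
    moreover have "(j+n-k) mod n < n" using n0 by simp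
    ultimately show ?thesis unfolding gp_adj_def using y n0 assms Vin Vin' ne by blast
  next
    assume y: "y = U j"
    have "{V j, y} = {U j, V j}" using y by auto
    thus ?thesis unfolding gp_adj_def using y assms Uin' Vin' by blast
  qed
qed

definition gi :: "nat \<Rightarrow> nat \<Rightarrow> nat \<Rightarrow> int \<Rightarrow> int \<Rightarrow> nat" where
  "gi n k i a b = nat ((int i + a + b * int k) mod int n)"

lemma gi_lt: "0 < n \<Longrightarrow> gi n k i a b < n"
  unfolding gi_def by (simp add: nat_less_iff)

lemma gi_int: "0 < n \<Longrightarrow> int (gi n k i a b) = (int i + a + b * int k) mod int n"
  unfolding gi_def by simp

lemma gi_eq: "0 < n \<Longrightarrow> gi n k i a b = gi n k i c d \<longleftrightarrow> (int i + a + b * int k) mod int n = (int i + c + d * int k) mod int n"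
  by (metis gi_int of_nat_eq_iff)

lemma gi_p1: assumes "0 < n" shows "(gi n k i a b + 1) mod n = gi n k i (a+1) b"
proof -
  have "int ((gi n k i a b + 1) mod n) = (int (gi n k i a b) + 1) mod int n" by (simp add: of_nat_mod algebra_simps)
  also have "\<dots> = ((int i + a + b * int k) mod int n + 1) mod int n" using assms by (simp add: gi_int)
  also have "\<dots> = (int i + a + b * int k + 1) mod int n" by (simp add: mod_add_left_eq)
  also have "\<dots> = (int i + (a+1) + b * int k) mod int n" by (simp add: algebra_simps)
  finally show ?thesis using assms by (metis gi_int of_nat_eq_iff)
qed

lemma gi_m1: assumes "0 < n" shows "(gi n k i a b + n - 1) mod n = gi n k i (a-1) b"
proof -
  have "int ((gi n k i a b + n - 1) mod n) = (int (gi n k i a b) + (int n - 1)) mod int n"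
    using assms by (simp add: of_nat_mod of_nat_diff algebra_simps)
  also have "\<dots> = ((int i + a + b * int k) mod int n + (int n - 1)) mod int n" using assms by (simp add: gi_int)
  also have "\<dots> = (int i + a + b * int k + (int n - 1)) mod int n" by (simp add: mod_add_left_eq)
  also have "\<dots> = (int i + (a - 1) + b * int k + int n) mod int n" by (simp add: algebra_simps)
  also have "\<dots> = (int i + (a - 1) + b * int k) mod int n" by simp
  finally show ?thesis using assms by (metis gi_int of_nat_eq_iff)
qed

lemma gi_pk: assumes "0 < n" shows "(gi n k i a b + k) mod n = gi n k i a (b+1)"
proof -
  have "int ((gi n k i a b + k) mod n) = (int (gi n k i a b) + int k) mod int n" by (simp add: of_nat_mod)
  also have "\<dots> = ((int i + a + b * int k) mod int n + int k) mod int n" using assms by (simp add: gi_int)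
  also have "\<dots> = (int i + a + b * int k + int k) mod int n" by (simp add: mod_add_left_eq)
  also have "\<dots> = (int i + a + (b+1) * int k) mod int n" by (simp add: algebra_simps)
  finally show ?thesis using assms by (metis gi_int of_nat_eq_iff)
qed

lemma gi_mk: assumes "0 < n" "k \<le> n" shows "(gi n k i a b + n - k) mod n = gi n k i a (b-1)"
proof -
  have "int ((gi n k i a b + n - k) mod n) = (int (gi n k i a b) + (int n - int k)) mod int n"
    using assms by (simp add: of_nat_mod of_nat_diff algebra_simps)
  also have "\<dots> = ((int i + a + b * int k) mod int n + (int n - int k)) mod int n" using assms by (simp add: gi_int)
  also have "\<dots> = (int i + a + b * int k + (int n - int k)) mod int n" by (simp add: mod_add_left_eq)
  also have "\<dots> = (int i + a + (b - 1) * int k + int n) mod int n" by (simp add: algebra_simps)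
  also have "\<dots> = (int i + a + (b - 1) * int k) mod int n" by simp
  finally show ?thesis using assms by (metis gi_int of_nat_eq_iff)
qed

lemma gi_distU: assumes "3 \<le> n" shows "gi n k i (a+1) b \<noteq> gi n k i (a-1) b"
proof
  assume "gi n k i (a+1) b = gi n k i (a-1) b"
  hence "(int i + (a+1) + b * int k) mod int n = (int i + (a-1) + b * int k) mod int n"
    using assms gi_eq by auto
  hence "int n dvd (int i + (a+1) + b * int k) - (int i + (a-1) + b * int k)"
    by (simp add: mod_eq_dvd_iff)
  hence "int n dvd 2" by simp
  hence "int n \<le> 2" using zdvd_imp_le[of "int n" 2] by simp
  thus False using assms by simp
qed

lemma gi_distV: assumes "0 < n" "(2 * k) mod n \<noteq> 0" shows "gi n k i a (b+1) \<noteq> gi n k i a (b-1)"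
proof
  assume "gi n k i a (b+1) = gi n k i a (b-1)"
  hence "(int i + a + (b+1) * int k) mod int n = (int i + a + (b-1) * int k) mod int n"
    using assms gi_eq by auto
  hence "int n dvd (int i + a + (b+1) * int k) - (int i + a + (b-1) * int k)"
    by (simp add: mod_eq_dvd_iff)
  hence "int n dvd int (2 * k)" by (simp add: algebra_simps)
  hence "n dvd 2 * k" by (simp only: of_nat_dvd_iff)
  thus False using assms by simp
qed

lemma gi_base: "0 < n \<Longrightarrow> j < n \<Longrightarrow> gi n k i (int j - int i) 0 = j"
  unfolding gi_def by simp

lemma grid_step:
  fixes cu cv :: "int \<Rightarrow> int \<Rightarrow> bool"
  assumes EU: "\<And>a b. (cu (a+1) b \<or> cu (a-1) b \<or> cv a b) \<and> \<not> (cu (a+1) b \<and> cu (a-1) b) \<and> \<not> (cu (a+1) b \<and> cv a b) \<and> \<not> (cu (a-1) b \<and> cv a b)"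
    and EV: "\<And>a b. (cv a (b+1) \<or> cv a (b-1) \<or> cu a b) \<and> \<not> (cv a (b+1) \<and> cv a (b-1)) \<and> \<not> (cv a (b+1) \<and> cu a b) \<and> \<not> (cv a (b-1) \<and> cu a b)"
    and "cu 0 0" "cv 0 0"
  shows "cu 3 0 \<and> cv 3 0"
proof -
  have h0: "(cu (-1) (-1) \<or> cu (-3) (-1) \<or> cv (-2) (-1)) \<and> \<not> (cu (-1) (-1) \<and> cu (-3) (-1)) \<and> \<not> (cu (-1) (-1) \<and> cv (-2) (-1)) \<and> \<not> (cu (-3) (-1) \<and> cv (-2) (-1))"
    using EU[of "-2" "-1"] by simp
  have h1: "(cv (-2) 1 \<or> cv (-2) (-1) \<or> cu (-2) 0) \<and> \<not> (cv (-2) 1 \<and> cv (-2) (-1)) \<and> \<not> (cv (-2) 1 \<and> cu (-2) 0) \<and> \<not> (cv (-2) (-1) \<and> cu (-2) 0)"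
    using EV[of "-2" "0"] by simp
  have h2: "(cu (-1) 1 \<or> cu (-3) 1 \<or> cv (-2) 1) \<and> \<not> (cu (-1) 1 \<and> cu (-3) 1) \<and> \<not> (cu (-1) 1 \<and> cv (-2) 1) \<and> \<not> (cu (-3) 1 \<and> cv (-2) 1)"
    using EU[of "-2" "1"] by simp
  have h3: "(cu 0 0 \<or> cu (-2) 0 \<or> cv (-1) 0) \<and> \<not> (cu 0 0 \<and> cu (-2) 0) \<and> \<not> (cu 0 0 \<and> cv (-1) 0) \<and> \<not> (cu (-2) 0 \<and> cv (-1) 0)"
    using EU[of "-1" "0"] by simp
  have h4: "(cv (-1) 2 \<or> cv (-1) 0 \<or> cu (-1) 1) \<and> \<not> (cv (-1) 2 \<and> cv (-1) 0) \<and> \<not> (cv (-1) 2 \<and> cu (-1) 1) \<and> \<not> (cv (-1) 0 \<and> cu (-1) 1)"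
    using EV[of "-1" "1"] by simp
  have h5: "(cu 0 2 \<or> cu (-2) 2 \<or> cv (-1) 2) \<and> \<not> (cu 0 2 \<and> cu (-2) 2) \<and> \<not> (cu 0 2 \<and> cv (-1) 2) \<and> \<not> (cu (-2) 2 \<and> cv (-1) 2)"
    using EU[of "-1" "2"] by simp
  have h6: "(cu 1 (-1) \<or> cu (-1) (-1) \<or> cv 0 (-1)) \<and> \<not> (cu 1 (-1) \<and> cu (-1) (-1)) \<and> \<not> (cu 1 (-1) \<and> cv 0 (-1)) \<and> \<not> (cu (-1) (-1) \<and> cv 0 (-1))"
    using EU[of "0" "-1"] by simp
  have h7: "(cv 0 0 \<or> cv 0 (-2) \<or> cu 0 (-1)) \<and> \<not> (cv 0 0 \<and> cv 0 (-2)) \<and> \<not> (cv 0 0 \<and> cu 0 (-1)) \<and> \<not> (cv 0 (-2) \<and> cu 0 (-1))"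
    using EV[of "0" "-1"] by simp
  have h8: "(cu 1 0 \<or> cu (-1) 0 \<or> cv 0 0) \<and> \<not> (cu 1 0 \<and> cu (-1) 0) \<and> \<not> (cu 1 0 \<and> cv 0 0) \<and> \<not> (cu (-1) 0 \<and> cv 0 0)"
    using EU[of "0" "0"] by simp
  have h9: "(cv 0 1 \<or> cv 0 (-1) \<or> cu 0 0) \<and> \<not> (cv 0 1 \<and> cv 0 (-1)) \<and> \<not> (cv 0 1 \<and> cu 0 0) \<and> \<not> (cv 0 (-1) \<and> cu 0 0)"
    using EV[of "0" "0"] by simp
  have h10: "(cu 1 1 \<or> cu (-1) 1 \<or> cv 0 1) \<and> \<not> (cu 1 1 \<and> cu (-1) 1) \<and> \<not> (cu 1 1 \<and> cv 0 1) \<and> \<not> (cu (-1) 1 \<and> cv 0 1)"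
    using EU[of "0" "1"] by simp
  have h11: "(cv 0 2 \<or> cv 0 0 \<or> cu 0 1) \<and> \<not> (cv 0 2 \<and> cv 0 0) \<and> \<not> (cv 0 2 \<and> cu 0 1) \<and> \<not> (cv 0 0 \<and> cu 0 1)"
    using EV[of "0" "1"] by simp
  have h12: "(cu 2 (-1) \<or> cu 0 (-1) \<or> cv 1 (-1)) \<and> \<not> (cu 2 (-1) \<and> cu 0 (-1)) \<and> \<not> (cu 2 (-1) \<and> cv 1 (-1)) \<and> \<not> (cu 0 (-1) \<and> cv 1 (-1))"
    using EU[of "1" "-1"] by simp
  have h13: "(cu 2 0 \<or> cu 0 0 \<or> cv 1 0) \<and> \<not> (cu 2 0 \<and> cu 0 0) \<and> \<not> (cu 2 0 \<and> cv 1 0) \<and> \<not> (cu 0 0 \<and> cv 1 0)"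
    using EU[of "1" "0"] by simp
  have h14: "(cv 1 1 \<or> cv 1 (-1) \<or> cu 1 0) \<and> \<not> (cv 1 1 \<and> cv 1 (-1)) \<and> \<not> (cv 1 1 \<and> cu 1 0) \<and> \<not> (cv 1 (-1) \<and> cu 1 0)"
    using EV[of "1" "0"] by simp
  have h15: "(cu 2 1 \<or> cu 0 1 \<or> cv 1 1) \<and> \<not> (cu 2 1 \<and> cu 0 1) \<and> \<not> (cu 2 1 \<and> cv 1 1) \<and> \<not> (cu 0 1 \<and> cv 1 1)"
    using EU[of "1" "1"] by simp
  have h16: "(cv 1 2 \<or> cv 1 0 \<or> cu 1 1) \<and> \<not> (cv 1 2 \<and> cv 1 0) \<and> \<not> (cv 1 2 \<and> cu 1 1) \<and> \<not> (cv 1 0 \<and> cu 1 1)"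
    using EV[of "1" "1"] by simp
  have h17: "(cu 2 2 \<or> cu 0 2 \<or> cv 1 2) \<and> \<not> (cu 2 2 \<and> cu 0 2) \<and> \<not> (cu 2 2 \<and> cv 1 2) \<and> \<not> (cu 0 2 \<and> cv 1 2)"
    using EU[of "1" "2"] by simp
  have h18: "(cv 1 4 \<or> cv 1 2 \<or> cu 1 3) \<and> \<not> (cv 1 4 \<and> cv 1 2) \<and> \<not> (cv 1 4 \<and> cu 1 3) \<and> \<not> (cv 1 2 \<and> cu 1 3)"
    using EV[of "1" "3"] by simp
  have h19: "(cu 3 (-1) \<or> cu 1 (-1) \<or> cv 2 (-1)) \<and> \<not> (cu 3 (-1) \<and> cu 1 (-1)) \<and> \<not> (cu 3 (-1) \<and> cv 2 (-1)) \<and> \<not> (cu 1 (-1) \<and> cv 2 (-1))"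
    using EU[of "2" "-1"] by simp
  have h20: "(cv 2 0 \<or> cv 2 (-2) \<or> cu 2 (-1)) \<and> \<not> (cv 2 0 \<and> cv 2 (-2)) \<and> \<not> (cv 2 0 \<and> cu 2 (-1)) \<and> \<not> (cv 2 (-2) \<and> cu 2 (-1))"
    using EV[of "2" "-1"] by simp
  have h21: "(cu 3 0 \<or> cu 1 0 \<or> cv 2 0) \<and> \<not> (cu 3 0 \<and> cu 1 0) \<and> \<not> (cu 3 0 \<and> cv 2 0) \<and> \<not> (cu 1 0 \<and> cv 2 0)"
    using EU[of "2" "0"] by simp
  have h22: "(cv 2 1 \<or> cv 2 (-1) \<or> cu 2 0) \<and> \<not> (cv 2 1 \<and> cv 2 (-1)) \<and> \<not> (cv 2 1 \<and> cu 2 0) \<and> \<not> (cv 2 (-1) \<and> cu 2 0)"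
    using EV[of "2" "0"] by simp
  have h23: "(cu 3 1 \<or> cu 1 1 \<or> cv 2 1) \<and> \<not> (cu 3 1 \<and> cu 1 1) \<and> \<not> (cu 3 1 \<and> cv 2 1) \<and> \<not> (cu 1 1 \<and> cv 2 1)"
    using EU[of "2" "1"] by simp
  have h24: "(cv 2 2 \<or> cv 2 0 \<or> cu 2 1) \<and> \<not> (cv 2 2 \<and> cv 2 0) \<and> \<not> (cv 2 2 \<and> cu 2 1) \<and> \<not> (cv 2 0 \<and> cu 2 1)"
    using EV[of "2" "1"] by simp
  have h25: "(cv 2 3 \<or> cv 2 1 \<or> cu 2 2) \<and> \<not> (cv 2 3 \<and> cv 2 1) \<and> \<not> (cv 2 3 \<and> cu 2 2) \<and> \<not> (cv 2 1 \<and> cu 2 2)"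
    using EV[of "2" "2"] by simp
  have h26: "(cu 3 3 \<or> cu 1 3 \<or> cv 2 3) \<and> \<not> (cu 3 3 \<and> cu 1 3) \<and> \<not> (cu 3 3 \<and> cv 2 3) \<and> \<not> (cu 1 3 \<and> cv 2 3)"
    using EU[of "2" "3"] by simp
  have h27: "(cv 3 2 \<or> cv 3 0 \<or> cu 3 1) \<and> \<not> (cv 3 2 \<and> cv 3 0) \<and> \<not> (cv 3 2 \<and> cu 3 1) \<and> \<not> (cv 3 0 \<and> cu 3 1)"
    using EV[of "3" "1"] by simp
  have h28: "(cu 4 2 \<or> cu 2 2 \<or> cv 3 2) \<and> \<not> (cu 4 2 \<and> cu 2 2) \<and> \<not> (cu 4 2 \<and> cv 3 2) \<and> \<not> (cu 2 2 \<and> cv 3 2)"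
    using EU[of "3" "2"] by simp
  have h29: "(cv 3 4 \<or> cv 3 2 \<or> cu 3 3) \<and> \<not> (cv 3 4 \<and> cv 3 2) \<and> \<not> (cv 3 4 \<and> cu 3 3) \<and> \<not> (cv 3 2 \<and> cu 3 3)"
    using EV[of "3" "3"] by simp
  show ?thesis using h0 h1 h2 h3 h4 h5 h6 h7 h8 h9 h10 h11 h12 h13 h14 h15 h16 h17 h18 h19 h20 h21 h22 h23 h24 h25 h26 h27 h28 h29 assms(3,4) by sat
qed
lemma grid_shift:
  fixes cu cv :: "int \<Rightarrow> int \<Rightarrow> bool"
  assumes EU: "\<And>a b. (cu (a+1) b \<or> cu (a-1) b \<or> cv a b) \<and> \<not> (cu (a+1) b \<and> cu (a-1) b) \<and> \<not> (cu (a+1) b \<and> cv a b) \<and> \<not> (cu (a-1) b \<and> cv a b)"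
    and EV: "\<And>a b. (cv a (b+1) \<or> cv a (b-1) \<or> cu a b) \<and> \<not> (cv a (b+1) \<and> cv a (b-1)) \<and> \<not> (cv a (b+1) \<and> cu a b) \<and> \<not> (cv a (b-1) \<and> cu a b)"
    and "cu x y" "cv x y"
  shows "cu (x+3) y \<and> cv (x+3) y" "cu (x-3) y \<and> cv (x-3) y"
proof -
  let ?cu = "\<lambda>a b. cu (a+x) (b+y)" and ?cv = "\<lambda>a b. cv (a+x) (b+y)"
  have "?cu 3 0 \<and> ?cv 3 0"
  proof (rule grid_step)
    fix a b :: int
    have e: "a + 1 + x = (a + x) + 1" "a - 1 + x = (a + x) - 1" "b + 1 + y = (b + y) + 1" "b - 1 + y = (b + y) - 1"
      by simp_all
    show "(?cu (a+1) b \<or> ?cu (a-1) b \<or> ?cv a b) \<and> \<not> (?cu (a+1) b \<and> ?cu (a-1) b) \<and> \<not> (?cu (a+1) b \<and> ?cv a b) \<and> \<not> (?cu (a-1) b \<and> ?cv a b)"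
      unfolding e by (rule EU)
    show "(?cv a (b+1) \<or> ?cv a (b-1) \<or> ?cu a b) \<and> \<not> (?cv a (b+1) \<and> ?cv a (b-1)) \<and> \<not> (?cv a (b+1) \<and> ?cu a b) \<and> \<not> (?cv a (b-1) \<and> ?cu a b)"
      unfolding e by (rule EV)
  next
    show "?cu 0 0" using assms(3) by simp
    show "?cv 0 0" using assms(4) by simp
  qed
  thus "cu (x+3) y \<and> cv (x+3) y" by (simp add: add.commute)
next
  let ?cu = "\<lambda>a b. cu (x-a) (b+y)" and ?cv = "\<lambda>a b. cv (x-a) (b+y)"
  have "?cu 3 0 \<and> ?cv 3 0"
  proof (rule grid_step)
    fix a b :: int
    have e: "x - (a + 1) = (x - a) - 1" "x - (a - 1) = (x - a) + 1" "b + 1 + y = (b + y) + 1" "b - 1 + y = (b + y) - 1"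
      by simp_all
    have h1: "(cu (x - a + 1) (b + y) \<or> cu (x - a - 1) (b + y) \<or> cv (x - a) (b + y)) \<and> \<not> (cu (x - a + 1) (b + y) \<and> cu (x - a - 1) (b + y)) \<and> \<not> (cu (x - a + 1) (b + y) \<and> cv (x - a) (b + y)) \<and> \<not> (cu (x - a - 1) (b + y) \<and> cv (x - a) (b + y))"
      by (rule EU)
    show "(?cu (a+1) b \<or> ?cu (a-1) b \<or> ?cv a b) \<and> \<not> (?cu (a+1) b \<and> ?cu (a-1) b) \<and> \<not> (?cu (a+1) b \<and> ?cv a b) \<and> \<not> (?cu (a-1) b \<and> ?cv a b)"
      unfolding e using h1 by blast
    show "(?cv a (b+1) \<or> ?cv a (b-1) \<or> ?cu a b) \<and> \<not> (?cv a (b+1) \<and> ?cv a (b-1)) \<and> \<not> (?cv a (b+1) \<and> ?cu a b) \<and> \<not> (?cv a (b-1) \<and> ?cu a b)"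
      unfolding e by (rule EV)
  next
    show "?cu 0 0" using assms(3) by simp
    show "?cv 0 0" using assms(4) by simp
  qed
  thus "cu (x-3) y \<and> cv (x-3) y" by simp
qed

lemma all_three:
  fixes cu cv :: "int \<Rightarrow> int \<Rightarrow> bool"
  assumes EU: "\<And>a b. (cu (a+1) b \<or> cu (a-1) b \<or> cv a b) \<and> \<not> (cu (a+1) b \<and> cu (a-1) b) \<and> \<not> (cu (a+1) b \<and> cv a b) \<and> \<not> (cu (a-1) b \<and> cv a b)"
    and EV: "\<And>a b. (cv a (b+1) \<or> cv a (b-1) \<or> cu a b) \<and> \<not> (cv a (b+1) \<and> cv a (b-1)) \<and> \<not> (cv a (b+1) \<and> cu a b) \<and> \<not> (cv a (b-1) \<and> cu a b)"
    and "cu 0 0" "cv 0 0"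
  shows "cu (3*t) 0 \<and> cv (3*t) 0"
proof (induction t rule: int_induct[where k=0])
  case base thus ?case using assms(3,4) by simp
next
  case (step1 i)
  have "cu (3*i+3) 0 \<and> cv (3*i+3) 0" using grid_shift(1)[OF EU EV] step1 by blast
  thus ?case by (simp add: algebra_simps)
next
  case (step2 i)
  have "cu (3*i-3) 0 \<and> cv (3*i-3) 0" using grid_shift(2)[OF EU EV] step2 by blast
  thus ?case by (simp add: algebra_simps)
qed

lemma noUU:
  fixes cu cv :: "int \<Rightarrow> int \<Rightarrow> bool"
  assumes EU: "\<And>a b. (cu (a+1) b \<or> cu (a-1) b \<or> cv a b) \<and> \<not> (cu (a+1) b \<and> cu (a-1) b) \<and> \<not> (cu (a+1) b \<and> cv a b) \<and> \<not> (cu (a-1) b \<and> cv a b)"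
    and S: "\<And>t. cu (3*t) 0 \<and> cv (3*t) 0"
  shows "\<not> (cu a 0 \<and> cu (a+1) 0)"
proof -
  define t where "t = a div 3"
  define r where "r = a mod 3"
  have a: "a = 3*t + r" unfolding t_def r_def by simp
  have "r = 0 \<or> r = 1 \<or> r = 2" unfolding r_def by auto
  thus ?thesis
  proof (elim disjE)
    assume "r = 0"
    hence "cv a 0" using S[of t] a by simp
    thus ?thesis using EU[of a 0] by blast
  next
    assume "r = 1"
    hence "cu (a-1) 0" using S[of t] a by simp
    thus ?thesis using EU[of a 0] by blast
  next
    assume "r = 2"
    hence h: "a + 1 = 3*(t+1)" using a by simp
    have "cv (3*(t+1)) 0" using S by blast
    hence "cv (a+1) 0" using h by metis
    thus ?thesis using EU[of "a+1" 0] by simp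
  qed
qed

lemma EUg:
  assumes "3 \<le> n" "0 < k" "k < n" "total_perfect_code n k C"
  shows "(U (gi n k i (a+1) b) \<in> C \<or> U (gi n k i (a-1) b) \<in> C \<or> V (gi n k i a b) \<in> C) \<and>
    \<not> (U (gi n k i (a+1) b) \<in> C \<and> U (gi n k i (a-1) b) \<in> C) \<and>
    \<not> (U (gi n k i (a+1) b) \<in> C \<and> V (gi n k i a b) \<in> C) \<and>
    \<not> (U (gi n k i (a-1) b) \<in> C \<and> V (gi n k i a b) \<in> C)"
proof -
  have n0: "0 < n" using assms by simp
  let ?j = "gi n k i a b"
  have j: "?j < n" using gi_lt n0 by blast
  have adj: "\<And>y. gp_adj n k (U ?j) y \<longleftrightarrow> (y = U (gi n k i (a+1) b) \<or> y = U (gi n k i (a-1) b) \<or> y = V ?j)"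
    using adjU[OF assms(1-3) j] gi_p1[OF n0] gi_m1[OF n0] by simp
  have ne: "gi n k i (a+1) b \<noteq> gi n k i (a-1) b" using gi_distU assms by blast
  have "\<exists>!c. c \<in> C \<and> gp_adj n k (U ?j) c" using assms(4) j Uin' unfolding total_perfect_code_def by blast
  hence E: "\<exists>!c. c \<in> C \<and> (c = U (gi n k i (a+1) b) \<or> c = U (gi n k i (a-1) b) \<or> c = V ?j)"
    by (simp only: adj)
  show ?thesis using E ne by blast
qed

lemma EVg:
  assumes "3 \<le> n" "0 < k" "k < n" "(2 * k) mod n \<noteq> 0" "total_perfect_code n k C"
  shows "(V (gi n k i a (b+1)) \<in> C \<or> V (gi n k i a (b-1)) \<in> C \<or> U (gi n k i a b) \<in> C) \<and>
    \<not> (V (gi n k i a (b+1)) \<in> C \<and> V (gi n k i a (b-1)) \<in> C) \<and>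
    \<not> (V (gi n k i a (b+1)) \<in> C \<and> U (gi n k i a b) \<in> C) \<and>
    \<not> (V (gi n k i a (b-1)) \<in> C \<and> U (gi n k i a b) \<in> C)"
proof -
  have n0: "0 < n" using assms by simp
  let ?j = "gi n k i a b"
  have j: "?j < n" using gi_lt n0 by blast
  have adj: "\<And>y. gp_adj n k (V ?j) y \<longleftrightarrow> (y = V (gi n k i a (b+1)) \<or> y = V (gi n k i a (b-1)) \<or> y = U ?j)"
    using adjV[OF assms(1-3) j] gi_pk[OF n0] gi_mk[OF n0] assms(3) by simp
  have ne: "gi n k i a (b+1) \<noteq> gi n k i a (b-1)" using gi_distV assms n0 by blast
  have "\<exists>!c. c \<in> C \<and> gp_adj n k (V ?j) c" using assms(5) j Vin' unfolding total_perfect_code_def by blast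
  hence E: "\<exists>!c. c \<in> C \<and> (c = V (gi n k i a (b+1)) \<or> c = V (gi n k i a (b-1)) \<or> c = U ?j)"
    by (simp only: adj)
  show ?thesis using E ne by blast
qed

theorem lemma4p3:
  fixes n k :: nat and C :: "gpv set"
  assumes "n \<ge> 3" and "0 < k" and "k < n" and "(2 * k) mod n \<noteq> 0"
    and "total_perfect_code n k C"
    and "edges_between n k C C \<inter> edges_between n k (Uset n) (Uset n) \<noteq> {}"
  shows "edges_between n k C C \<inter> edges_between n k (Uset n) (Vset n) = {}"
proof (rule ccontr)
  have n0: "0 < n" using assms by simp
  assume "edges_between n k C C \<inter> edges_between n k (Uset n) (Vset n) \<noteq> {}"
  then obtain e where e1: "e \<in> edges_between n k C C" and e2: "e \<in> edges_between n k (Uset n) (Vset n)" by blast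
  from e1 obtain x y where xy0: "e = {x, y}" "gp_adj n k x y" "x \<in> C" "y \<in> C" unfolding edges_between_def by blast
  from e2 obtain x' y' where x'y'0: "e = {x', y'}" "gp_adj n k x' y'" "x' \<in> Uset n" "y' \<in> Vset n" unfolding edges_between_def by blast
  have xy: "x \<in> C" "y \<in> C" "{x, y} = {x', y'}" using xy0(3,4) apply - apply assumption+
    using xy0(1) x'y'0(1) by simp
  note x'y' = x'y'0(2-4)
  obtain i where i: "i < n" "x' = U i" using x'y' unfolding Uset_def by blast
  obtain i2 where i2: "y' = V i2" using x'y' unfolding Vset_def by blast
  have "gp_adj n k (U i) (V i2)" using x'y'(1) i i2 by simp
  hence "i2 = i" using adjU[OF assms(1-3) i(1)] by simp
  hence "y' = V i" using i2 by simp
  hence Si: "U i \<in> C" "V i \<in> C" using xy i by (auto simp: doubleton_eq_iff)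
  from assms(6) obtain f where f1: "f \<in> edges_between n k C C" and f2: "f \<in> edges_between n k (Uset n) (Uset n)" by blast
  from f1 obtain p q where pq0: "f = {p, q}" "gp_adj n k p q" "p \<in> C" "q \<in> C" unfolding edges_between_def by blast
  from f2 obtain p' q' where p'q'0: "f = {p', q'}" "p' \<in> Uset n" "q' \<in> Uset n" unfolding edges_between_def by blast
  have pq: "gp_adj n k p q" "p \<in> C" "q \<in> C" "{p, q} = {p', q'}" using pq0(2-4) apply - apply assumption+
    using pq0(1) p'q'0(1) by simp
  note p'q' = p'q'0(2,3)
  have "p \<in> Uset n" "q \<in> Uset n" using pq(4) p'q' by (auto simp: doubleton_eq_iff)
  then obtain j1 j2 where j: "p = U j1" "q = U j2" "j1 < n" unfolding Uset_def by blast
  define cu where "cu a b = (U (gi n k i a b) \<in> C)" for a b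
  define cv where "cv a b = (V (gi n k i a b) \<in> C)" for a b
  have EU: "\<And>a b. (cu (a+1) b \<or> cu (a-1) b \<or> cv a b) \<and> \<not> (cu (a+1) b \<and> cu (a-1) b) \<and> \<not> (cu (a+1) b \<and> cv a b) \<and> \<not> (cu (a-1) b \<and> cv a b)"
    unfolding cu_def cv_def by (rule EUg[OF assms(1-3) assms(5)])
  have EV: "\<And>a b. (cv a (b+1) \<or> cv a (b-1) \<or> cu a b) \<and> \<not> (cv a (b+1) \<and> cv a (b-1)) \<and> \<not> (cv a (b+1) \<and> cu a b) \<and> \<not> (cv a (b-1) \<and> cu a b)"
    unfolding cu_def cv_def by (rule EVg[OF assms(1-5)])
  have g0: "gi n k i 0 0 = i" using gi_base[OF n0 i(1), of k i] by simp
  have "cu 0 0" "cv 0 0" unfolding cu_def cv_def using g0 Si by auto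
  hence S: "\<And>t. cu (3*t) 0 \<and> cv (3*t) 0" using all_three[OF EU EV] by blast
  define a where "a = int j1 - int i"
  have ga: "gi n k i a 0 = j1" unfolding a_def using gi_base[OF n0 j(3)] by blast
  have cua: "cu a 0" unfolding cu_def using ga pq j by simp
  have "j2 = (j1+1) mod n \<or> j2 = (j1+n-1) mod n" using pq(1) j adjU[OF assms(1-3) j(3)] by auto
  hence "cu (a+1) 0 \<or> cu (a-1) 0"
    unfolding cu_def using gi_p1[OF n0, of k i a 0] gi_m1[OF n0, of k i a 0] ga pq j by auto
  thus False using noUU[of cu cv, OF EU S, of a] noUU[of cu cv, OF EU S, of "a-1"] cua by auto
qed

end
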